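(* There is a (deterministic) $\Sigma_{\diamond}$-matrix $\mathbb{M}$ such that $\rhd_{\diamond}=\rhd_{\mathbb{M}}$.
   Context: $\Sigma_\diamond$ is the signature with a single binary connective $\diamond$ (platypus). $\mathbb{B}_\diamond=\langle\{0,1\},\cdot,\{1\}\rangle$ is the two-valued Nmatrix interpreting $\diamond$ by $\diamond(0,0)=\{0\}$, $\diamond(1,1)=\{1\}$, $\diamond(0,1)=\diamond(1,0)=\{0,1\}$. For an Nmatrix (or matrix, where all connectives are interpreted as functions) $\mathbb{M}$ with designated set $D$, $\Gamma\rhd_{\mathbb{M}}\Delta$ iff every $\mathbb{M}$-valuation $v$ with $v(\Gamma)\subseteq D$ satisfies $v(\Delta)\cap D\neq\emptyset$; $\rhd_\diamond$ is $\rhd_{\mathbb{B}_\diamond}$. A matrix is deterministic, i.e. each connective is interpreted as a function. *)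

theory Defs
  imports Main
begin

datatype form = Var nat | Plat form form

text \<open>The two-valued Nmatrix B_platypus: values {0,1} rendered as bool (True = 1),
  designated set {1}.\<close>
definition plat_nd :: "bool \<Rightarrow> bool \<Rightarrow> bool set" where
  "plat_nd a b = (if a = b then {a} else {False, True})"

definition Bval :: "(form \<Rightarrow> bool) \<Rightarrow> bool" where
  "Bval v \<longleftrightarrow> (\<forall>A B. v (Plat A B) \<in> plat_nd (v A) (v B))"

definition plat_cons :: "form set \<Rightarrow> form set \<Rightarrow> bool" where
  "plat_cons \<Gamma> \<Delta> \<longleftrightarrow> (\<forall>v. Bval v \<longrightarrow> (\<forall>A\<in>\<Gamma>. v A) \<longrightarrow> (\<exists>B\<in>\<Delta>. v B))"

definition is_matrix :: "'v set \<Rightarrow> ('v \<Rightarrow> 'v \<Rightarrow> 'v) \<Rightarrow> 'v set \<Rightarrow> bool" where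
  "is_matrix V f D \<longleftrightarrow> V \<noteq> {} \<and> D \<subseteq> V \<and> (\<forall>a\<in>V. \<forall>b\<in>V. f a b \<in> V)"

definition mval :: "'v set \<Rightarrow> ('v \<Rightarrow> 'v \<Rightarrow> 'v) \<Rightarrow> (form \<Rightarrow> 'v) \<Rightarrow> bool" where
  "mval V f v \<longleftrightarrow> (\<forall>A. v A \<in> V) \<and> (\<forall>A B. v (Plat A B) = f (v A) (v B))"

definition mcons :: "'v set \<Rightarrow> ('v \<Rightarrow> 'v \<Rightarrow> 'v) \<Rightarrow> 'v set \<Rightarrow> form set \<Rightarrow> form set \<Rightarrow> bool" where
  "mcons V f D \<Gamma> \<Delta> \<longleftrightarrow>
     (\<forall>v. mval V f v \<longrightarrow> v ` \<Gamma> \<subseteq> D \<longrightarrow> v ` \<Delta> \<inter> D \<noteq> {})"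

end

theory Submission
  imports Defs "HOL-Library.Countable"
begin

instance form :: countable by countable_datatype

definition pk :: "bool \<Rightarrow> form \<Rightarrow> nat set \<Rightarrow> nat set" where
  "pk b A S = (if b then {0} else {}) \<union> {3 * to_nat A + 1} \<union> (\<lambda>k. 3*k+2) ` S"

definition enc :: "bool \<Rightarrow> form \<Rightarrow> nat set \<Rightarrow> nat set set" where
  "enc b A S = {pk b A S}"

definition dec :: "nat set set \<Rightarrow> nat set" where
  "dec X = \<Union>X"

definition fm :: "nat set \<Rightarrow> form" where
  "fm P = from_nat (THE n. 3*n+1 \<in> P)"

definition ch :: "nat set \<Rightarrow> nat set" where
  "ch P = {k. 3*k+2 \<in> P}"

definition ff :: "nat set set \<Rightarrow> nat set set \<Rightarrow> nat set set" where
  "ff X Y = (let P = dec X; Q = dec Y; C = Plat (fm P) (fm Q) in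
     enc (if (0 \<in> P) = (0 \<in> Q) then 0 \<in> P else to_nat C \<in> ch P) C (ch P))"

lemma dec_enc[simp]: "dec (enc b A S) = pk b A S"
  by (simp add: dec_def enc_def)

lemma bit_pk[simp]: "(0 \<in> pk b A S) = b"
  by (auto simp: pk_def)

lemma fm_pk[simp]: "fm (pk b A S) = A"
proof -
  have "(THE n. 3*n+1 \<in> pk b A S) = to_nat A"
  proof (rule the_equality)
    show "3 * to_nat A + 1 \<in> pk b A S" by (simp add: pk_def)
  next
    fix n assume "3*n+1 \<in> pk b A S"
    thus "n = to_nat A" by (auto simp: pk_def split: if_splits; presburger)
  qed
  thus ?thesis by (simp add: fm_def)
qed

lemma ch_pk[simp]: "ch (pk b A S) = S"
proof -
  have "\<And>k. (3*k+2 \<in> pk b A S) = (k \<in> S)"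
  proof -
    fix k
    have "3*k+2 \<noteq> 3 * to_nat A + 1" by presburger
    moreover have "(3*k+2 \<in> (\<lambda>k. 3*k+2) ` S) = (k \<in> S)" by auto
    ultimately show "(3*k+2 \<in> pk b A S) = (k \<in> S)" by (simp add: pk_def)
  qed
  thus ?thesis by (simp add: ch_def)
qed

theorem proposition3:
  shows "\<exists>(V :: nat set set set) f D. is_matrix V f D \<and>
           (\<forall>\<Gamma> \<Delta>. plat_cons \<Gamma> \<Delta> \<longleftrightarrow> mcons V f D \<Gamma> \<Delta>)"
proof -
  have M: "is_matrix (UNIV :: nat set set set) ff {X. 0 \<in> dec X}" by (simp add: is_matrix_def)
  have E: "plat_cons \<Gamma> \<Delta> = mcons UNIV ff {X. 0 \<in> dec X} \<Gamma> \<Delta>" for \<Gamma> \<Delta>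
  proof
    assume pc: "plat_cons \<Gamma> \<Delta>"
    show "mcons UNIV ff {X. 0 \<in> dec X} \<Gamma> \<Delta>"
      unfolding mcons_def
    proof (intro allI impI)
      fix u assume mv: "mval UNIV ff u" and g: "u ` \<Gamma> \<subseteq> {X. 0 \<in> dec X}"
      define w where "w A = (0 \<in> dec (u A))" for A
      have "Bval w"
        unfolding Bval_def
      proof (intro allI)
        fix A B
        have "u (Plat A B) = ff (u A) (u B)" using mv by (simp add: mval_def)
        thus "w (Plat A B) \<in> plat_nd (w A) (w B)"
          by (auto simp: w_def ff_def Let_def plat_nd_def)
      qed
      moreover have "\<forall>A\<in>\<Gamma>. w A" using g by (auto simp: w_def)
      ultimately obtain B where "B \<in> \<Delta>" "w B" using pc by (auto simp: plat_cons_def)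
      thus "u ` \<Delta> \<inter> {X. 0 \<in> dec X} \<noteq> {}" by (auto simp: w_def)
    qed
  next
    assume mc: "mcons UNIV ff {X. 0 \<in> dec X} \<Gamma> \<Delta>"
    show "plat_cons \<Gamma> \<Delta>"
      unfolding plat_cons_def
    proof (intro allI impI)
      fix w assume bv: "Bval w" and g: "\<forall>A\<in>\<Gamma>. w A"
      define S where "S = to_nat ` {A. w A}"
      define u where "u A = enc (w A) A S" for A
      have "mval UNIV ff u"
        unfolding mval_def
      proof (intro conjI allI)
        fix A B
        have "w (Plat A B) \<in> plat_nd (w A) (w B)" using bv by (simp add: Bval_def)
        moreover have "(to_nat (Plat A B) \<in> S) = w (Plat A B)"
          by (auto simp: S_def)
        ultimately show "u (Plat A B) = ff (u A) (u B)"
          by (auto simp: u_def ff_def Let_def plat_nd_def split: if_splits)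
      qed simp
      moreover have "u ` \<Gamma> \<subseteq> {X. 0 \<in> dec X}" using g by (auto simp: u_def)
      ultimately have "u ` \<Delta> \<inter> {X. 0 \<in> dec X} \<noteq> {}" using mc by (auto simp: mcons_def)
      thus "\<exists>B\<in>\<Delta>. w B" by (auto simp: u_def)
    qed
  qed
  show ?thesis using M E by blast
qed

end
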